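(* For every $n\ge1$ and every $g\in\mathcal D_n$, $$a(N)\,v^N_n(g)=v^N_{n+1}(a\,g),\qquad a^*(N)\,v^N_n(g)=v^N_{n-1}(a^*g)+O(1/N),$$ where $O(1/N)$ denotes a vector of norm at most $C/N$ with $C>0$ independent of $N$.
   Context: Continuous side: $\mathcal X_{n,m}=\{(x_1,\dots,x_n)\in\mathbb{R}^n:x_1>\dots>x_m<\dots<x_n\}$, $\mathcal X_n=\bigcup_m\mathcal X_{n,m}$, $\mathbb 1_n,\mathbb 1_{n,m}$ their indicators; $\mathcal{CV}=\mathbb{C}\Lambda\oplus\bigoplus_{n\ge1}L^2(\mathcal X_n)$. $a=a(\mathbb 1_{[0,1]})$: $a\Lambda=\mathbb 1_{[0,1]}$, $(ag)(x,x_1,\dots,x_n)=\mathbb 1_{[0,1]}(x)\mathbb 1_{n+1}(x,x_1,\dots,x_n)g(x_1,\dots,x_n)$; $a^*$: $a^*\Lambda=0$, $a^*g=(\int_0^1g)\Lambda$ for $g\in L^2(\mathcal X_1)$, and $(a^*g)(\vec x)=\mathbb 1_{n,1}(\vec x)\int_0^{x_1}g(x,\vec x)dx+\int_{x_1}^1g(x,\vec x)dx$ for $g\in L^2(\mathcal X_{n+1})$. $\mathcal D_n$ ($n\ge1$) is the set of $g\in L^2(\mathcal X_n)$ that vanish outside $[0,1]^n$ and coincide on each $\mathcal X_{n,m}\cap[0,1]^n$ with a polynomial $g_{n,m}$; $\mathcal D_0=\mathbb{C}\Lambda$. Discrete side: $I=\mathbb{N}_+$, $I_n$ the set of $(i_1,\dots,i_n)$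 with $i_1>\dots>i_m<\dots<i_n$ for some $m$; $\mathcal{DV}$ with orthonormal basis $\{\Omega\}\cup\{e_{i_1}\otimes\dots\otimes e_{i_n}:(i_1,\dots,i_n)\in I_n\}$; $a_i\Omega=e_i$, $a_i(e_{i_1}\otimes\dots\otimes e_{i_n})=\mathbf 1[(i,i_1,\dots,i_n)\in I_{n+1}]\,e_i\otimes e_{i_1}\otimes\dots\otimes e_{i_n}$; $a(N)=N^{-1/2}\sum_{i=1}^Na_i$, $a^*(N)=a(N)^*$. Vectors: $v^N_0(c\Lambda)=c\Omega$ and $v^N_n(g)=N^{-n/2}\sum_{(i_1,\dots,i_n)\in I_n\cap[N]^n}g(i_1/N,\dots,i_n/N)\,e_{i_1}\otimes\dots\otimes e_{i_n}$ for $g\in\mathcal D_n$. *)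

theory Defs
  imports "HOL-Analysis.Analysis"
begin

definition vshape :: "nat \<Rightarrow> 'a::linorder list \<Rightarrow> bool" where
  "vshape m xs \<longleftrightarrow> 1 \<le> m \<and> m \<le> length xs \<and>
     sorted_wrt (>) (take m xs) \<and> sorted_wrt (<) (drop (m - 1) xs)"

definition inX :: "real list \<Rightarrow> bool" where
  "inX xs \<longleftrightarrow> (\<exists>m. vshape m xs)"

section \<open>Continuous side: vectors of CV represented by functions on real lists;
  a function of lists of length n represents an element of L^2(X_n), and the value
  at the empty list represents the coefficient of Lambda.\<close>

definition poly_fun :: "nat \<Rightarrow> (real list \<Rightarrow> complex) \<Rightarrow> bool" where
  "poly_fun n p \<longleftrightarrow> (\<exists>(d::nat) (c::nat list \<Rightarrow> complex). \<forall>xs. length xs = n \<longrightarrow>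
      p xs = (\<Sum>\<alpha>\<in>{\<alpha>. length \<alpha> = n \<and> set \<alpha> \<subseteq> {..d}}.
                 c \<alpha> * (\<Prod>i<n. complex_of_real (xs ! i) ^ (\<alpha> ! i))))"

definition Dn :: "nat \<Rightarrow> (real list \<Rightarrow> complex) set" where
  "Dn n = {g.
     (\<forall>xs. length xs = n \<and> inX xs \<and> \<not> (\<forall>x\<in>set xs. 0 \<le> x \<and> x \<le> 1) \<longrightarrow> g xs = 0) \<and>
     (\<forall>m\<in>{1..n}. \<exists>p. poly_fun n p \<and>
        (\<forall>xs. length xs = n \<and> vshape m xs \<and> (\<forall>x\<in>set xs. 0 \<le> x \<and> x \<le> 1) \<longrightarrow> g xs = p xs))}"

fun a_cont :: "(real list \<Rightarrow> complex) \<Rightarrow> real list \<Rightarrow> complex" where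
  "a_cont g [] = 0"
| "a_cont g (x # xs) =
     (if x \<in> {0..1} \<and> (xs = [] \<or> inX (x # xs)) then g xs else 0)"

fun a_adj_cont :: "(real list \<Rightarrow> complex) \<Rightarrow> real list \<Rightarrow> complex" where
  "a_adj_cont g [] = (LBINT x:{0..1}. g [x])"
| "a_adj_cont g (x1 # xs) =
     (if vshape 1 (x1 # xs) then (LBINT x:{0..x1}. g (x # x1 # xs)) else 0)
     + (LBINT x:{x1..1}. g (x # x1 # xs))"

section \<open>Discrete side: vectors of DV as coefficient functions on index lists;
  the empty list stands for Omega, a list (i_1,...,i_n) for e_{i_1} \<otimes> ... \<otimes> e_{i_n}.\<close>

definition validI :: "nat list \<Rightarrow> bool" where
  "validI ws \<longleftrightarrow> (ws = [] \<or> (\<exists>m. vshape m ws)) \<and> (\<forall>i\<in>set ws. 1 \<le> i)"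

definition a_i :: "nat \<Rightarrow> (nat list \<Rightarrow> complex) \<Rightarrow> nat list \<Rightarrow> complex" where
  "a_i i v w = (case w of [] \<Rightarrow> 0 | j # ws \<Rightarrow> if j = i \<and> validI w then v ws else 0)"

definition aN :: "nat \<Rightarrow> (nat list \<Rightarrow> complex) \<Rightarrow> nat list \<Rightarrow> complex" where
  "aN N v w = complex_of_real (1 / sqrt (real N)) * (\<Sum>i=1..N. a_i i v w)"

text \<open>The adjoint a^*(N) = a(N)^*, written out on coefficients (a_i^* e_{i#ws} = e_ws).\<close>
definition aN_adj :: "nat \<Rightarrow> (nat list \<Rightarrow> complex) \<Rightarrow> nat list \<Rightarrow> complex" where
  "aN_adj N v ws = complex_of_real (1 / sqrt (real N)) *
     (\<Sum>i=1..N. if validI ws \<and> validI (i # ws) then v (i # ws) else 0)"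

definition dv_norm :: "(nat list \<Rightarrow> complex) \<Rightarrow> real" where
  "dv_norm v = sqrt (infsum (\<lambda>w. (cmod (v w))\<^sup>2) UNIV)"

text \<open>The embedding v^N_n (for n = 0 it gives c Omega from c Lambda).\<close>
definition vN :: "nat \<Rightarrow> nat \<Rightarrow> (real list \<Rightarrow> complex) \<Rightarrow> nat list \<Rightarrow> complex" where
  "vN N n g w = (if length w = n \<and> validI w \<and> (\<forall>i\<in>set w. i \<le> N)
       then complex_of_real (real N powr (- real n / 2)) * g (map (\<lambda>i. real i / real N) w)
       else 0)"

end

theory Submission
  imports Defs
begin

lemma vshape_map:
  assumes "\<And>x y. f x < f y \<longleftrightarrow> x < y"
  shows "vshape m (map f xs) \<longleftrightarrow> vshape m xs"
  using assms by (simp add: vshape_def sorted_wrt_map take_map drop_map)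

lemma vshape_tail:
  assumes "vshape m (x # xs)" "xs \<noteq> []"
  shows "\<exists>m'. vshape m' (xs::'a::linorder list)"
proof (cases "m = 1")
  case True
  then have "vshape 1 xs" using assms by (cases xs) (auto simp: vshape_def)
  then show ?thesis by blast
next
  case False
  with assms have "vshape (m - 1) xs"
    by (cases m) (auto simp: vshape_def drop_Cons')
  then show ?thesis by blast
qed

lemma vshape_cons_gt:
  assumes "vshape m (y # ys)" "x > y"
  shows "vshape (Suc m) (x # y # (ys::'a::linorder list))"
  using assms by (cases m) (auto simp: vshape_def drop_Cons')

lemma vshape_cons_lt:
  assumes "vshape 1 (y # ys)" "x < y"
  shows "vshape 1 (x # y # (ys::'a::linorder list))"
  using assms by (auto simp: vshape_def)

lemma vshape_cons_inv:
  assumes "vshape m (x # y # (ys::'a::linorder list))"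
  shows "(y < x \<and> vshape (m - 1) (y # ys) \<and> m \<ge> 2) \<or> (x < y \<and> m = 1 \<and> vshape 1 (y # ys))"
  using assms by (cases m; cases "m - 1") (auto simp: vshape_def)

lemma vshape_single: "vshape 1 [x]" by (simp add: vshape_def)

lemma validI_tail: "validI (j # ws) \<Longrightarrow> ws \<noteq> [] \<Longrightarrow> validI ws"
  unfolding validI_def using vshape_tail by fastforce

lemma sum_a_i: "(\<Sum>i=1..N. a_i i v (j # ws)) = (if 1 \<le> j \<and> j \<le> N \<and> validI (j # ws) then v ws else 0)"
  unfolding a_i_def by (cases "validI (j # ws)") (auto simp: sum.delta')

lemma powr_lem1: "N \<ge> 1 \<Longrightarrow> complex_of_real (1 / sqrt (real N)) * complex_of_real (real N powr (- real n / 2))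
   = complex_of_real (real N powr (- real (n + 1) / 2))"
proof -
  assume "N \<ge> 1"
  then have "1 / sqrt (real N) * real N powr (- real n / 2) = real N powr (- real (n + 1) / 2)"
    by (simp add: powr_half_sqrt[symmetric] powr_minus_divide[symmetric] powr_add[symmetric] field_simps)
  then show ?thesis by (metis of_real_mult)
qed

lemma inX_map: "N \<ge> 1 \<Longrightarrow> validI w \<Longrightarrow> w \<noteq> [] \<Longrightarrow> inX (map (\<lambda>i. real i / real N) w)"
proof -
  assume a: "N \<ge> 1" "validI w" "w \<noteq> []"
  have "\<And>x y::nat. real x / real N < real y / real N \<longleftrightarrow> x < y" using a(1) by (simp add: divide_less_cancel)
  then show ?thesis using a unfolding inX_def validI_def by (subst vshape_map) auto
qed

lemma part1:
  assumes "n \<ge> 1" "N \<ge> 1"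
  shows "aN N (vN N n g) = vN N (n + 1) (a_cont g)"
proof
  fix w
  show "aN N (vN N n g) w = vN N (n + 1) (a_cont g) w"
  proof (cases w)
    case Nil
    then show ?thesis by (simp add: aN_def a_i_def vN_def)
  next
    case (Cons j ws)
    show ?thesis
    proof (cases "length ws = n \<and> validI (j # ws) \<and> (\<forall>i\<in>set (j#ws). i \<le> N)")
      case True
      then have ws: "ws \<noteq> []" "validI ws" "1 \<le> j" using assms validI_tail[of j ws]
        by (auto simp: validI_def)
      have ix: "inX (map (\<lambda>i. real i / real N) (j # ws))"
        using inX_map[OF assms(2)] True by blast
      have j01: "real j / real N \<in> {0..1}" using True assms by auto
      have "aN N (vN N n g) w = complex_of_real (1 / sqrt (real N)) * (complex_of_real (real N powr (- real n / 2)) * g (map (\<lambda>i. real i / real N) ws))"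
        using True ws unfolding aN_def Cons sum_a_i by (simp add: vN_def)
      also have "\<dots> = complex_of_real (real N powr (- real (n + 1) / 2)) * g (map (\<lambda>i. real i / real N) ws)"
        by (simp only: mult.assoc[symmetric] powr_lem1[OF assms(2)])
      also have "\<dots> = vN N (n + 1) (a_cont g) w"
        using True ws ix j01 unfolding Cons by (simp add: vN_def del: of_nat_Suc)
      finally show ?thesis .
    next
      case False
      then show ?thesis unfolding aN_def Cons sum_a_i
        by (auto simp: vN_def)
    qed
  qed
qed

lemma prod_pow_norm_le1:
  assumes "\<And>i. i < n \<Longrightarrow> \<bar>zs ! i\<bar> \<le> (1::real)"
  shows "norm (\<Prod>i<n. complex_of_real (zs ! i) ^ (al ! i)) \<le> 1"
proof -
  have "norm (\<Prod>i<n. complex_of_real (zs ! i) ^ (al ! i)) \<le> (\<Prod>i<n. norm (complex_of_real (zs ! i) ^ (al ! i)))"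
    by (rule norm_prod_le)
  also have "\<dots> \<le> 1"
    using assms by (intro prod_le_1) (auto simp: norm_power intro!: power_le_one)
  finally show ?thesis .
qed

lemma prod_pow_diff:
  assumes "\<And>i. i < length xs \<Longrightarrow> \<bar>xs ! i\<bar> \<le> (1::real)" "\<bar>x\<bar> \<le> 1" "\<bar>y\<bar> \<le> 1" "length xs = n - 1" "n \<ge> 1"
    "set al \<subseteq> {..d}" "length al = n"
  shows "norm ((\<Prod>i<n. complex_of_real ((x#xs) ! i) ^ (al ! i)) - (\<Prod>i<n. complex_of_real ((y#xs) ! i) ^ (al ! i)))
     \<le> real d * \<bar>x - y\<bar>"
proof -
  have b1: "\<bar>(x#xs) ! i\<bar> \<le> 1" "\<bar>(y#xs) ! i\<bar> \<le> 1" if "i < n" for i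
    using assms that by (cases i; auto)+
  have "norm ((\<Prod>i<n. complex_of_real ((x#xs) ! i) ^ (al ! i)) - (\<Prod>i<n. complex_of_real ((y#xs) ! i) ^ (al ! i)))
     \<le> (\<Sum>i<n. norm (complex_of_real ((x#xs) ! i) ^ (al ! i) - complex_of_real ((y#xs) ! i) ^ (al ! i)))"
    using b1 by (intro norm_prod_diff) (auto simp: norm_power intro!: power_le_one)
  also have "\<dots> = norm (complex_of_real x ^ (al ! 0) - complex_of_real y ^ (al ! 0))"
  proof -
    have "(\<Sum>i<n. norm (complex_of_real ((x#xs) ! i) ^ (al ! i) - complex_of_real ((y#xs) ! i) ^ (al ! i)))
      = norm (complex_of_real ((x#xs) ! 0) ^ (al ! 0) - complex_of_real ((y#xs) ! 0) ^ (al ! 0))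
       + (\<Sum>i\<in>{..<n} - {0}. norm (complex_of_real ((x#xs) ! i) ^ (al ! i) - complex_of_real ((y#xs) ! i) ^ (al ! i)))"
      using assms(5) by (subst sum.remove[of _ 0]) auto
    also have "(\<Sum>i\<in>{..<n} - {0}. norm (complex_of_real ((x#xs) ! i) ^ (al ! i) - complex_of_real ((y#xs) ! i) ^ (al ! i))) = 0"
      by (intro sum.neutral) (auto simp: nth_Cons')
    finally show ?thesis by simp
  qed
  also have "\<dots> \<le> real (al ! 0) * norm (complex_of_real x - complex_of_real y)"
    using assms by (intro norm_power_diff) auto
  also have "\<dots> \<le> real d * \<bar>x - y\<bar>"
  proof -
    have "al ! 0 \<in> set al" using assms by auto
    then have "al ! 0 \<le> d" using assms(6) by (meson atMost_iff subsetD)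
    then show ?thesis by (simp add: mult_right_mono flip: of_real_diff)
  qed
  finally show ?thesis .
qed

lemma poly_fun_lip:
  assumes "poly_fun n p" "n \<ge> 1"
  shows "\<exists>L M. L \<ge> 0 \<and> M \<ge> 0 \<and> (\<forall>x y xs. length xs = n - 1 \<and> (\<forall>z\<in>set xs. 0 \<le> z \<and> z \<le> 1)
     \<and> 0 \<le> x \<and> x \<le> 1 \<and> 0 \<le> y \<and> y \<le> 1 \<longrightarrow>
       cmod (p (x # xs)) \<le> M \<and> cmod (p (x # xs) - p (y # xs)) \<le> L * \<bar>x - y\<bar>)"
proof -
  obtain d c where pc: "\<And>xs. length xs = n \<Longrightarrow> p xs = (\<Sum>\<alpha>\<in>{\<alpha>. length \<alpha> = n \<and> set \<alpha> \<subseteq> {..d}}.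
                 c \<alpha> * (\<Prod>i<n. complex_of_real (xs ! i) ^ (\<alpha> ! i)))"
    using assms(1) unfolding poly_fun_def by blast
  define A where "A = {\<alpha>::nat list. length \<alpha> = n \<and> set \<alpha> \<subseteq> {..d}}"
  have finA: "finite A" unfolding A_def
    using finite_lists_length_eq[of "{..d}" n] by (simp add: conj_commute)
  define M where "M = (\<Sum>\<alpha>\<in>A. cmod (c \<alpha>))"
  have M0: "M \<ge> 0" unfolding M_def by (simp add: sum_nonneg)
  show ?thesis
  proof (intro exI conjI allI impI)
    show "0 \<le> real d * M" using M0 by simp
    show "0 \<le> M" by (rule M0)
    fix x y :: real and xs :: "real list" assume h: "length xs = n - 1 \<and> (\<forall>z\<in>set xs. 0 \<le> z \<and> z \<le> 1) \<and> 0 \<le> x \<and> x \<le> 1 \<and> 0 \<le> y \<and> y \<le> 1"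
    have bx: "\<And>i. i < length xs \<Longrightarrow> \<bar>xs ! i\<bar> \<le> 1" using h nth_mem by fastforce
    have len: "length (x # xs) = n" "length (y # xs) = n" using h assms(2) by auto
    have b1: "\<bar>(x#xs) ! i\<bar> \<le> 1" if "i < n" for i
      using h bx that len by (cases i) auto
    have "cmod (p (x # xs)) \<le> (\<Sum>\<alpha>\<in>A. cmod (c \<alpha> * (\<Prod>i<n. complex_of_real ((x#xs) ! i) ^ (\<alpha> ! i))))"
      unfolding pc[OF len(1)] A_def[symmetric] by (rule norm_sum)
    also have "\<dots> \<le> (\<Sum>\<alpha>\<in>A. cmod (c \<alpha>) * 1)"
      unfolding norm_mult by (intro sum_mono mult_left_mono prod_pow_norm_le1 b1) auto
    finally show "cmod (p (x # xs)) \<le> M" by (simp add: M_def)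
    have "cmod (p (x # xs) - p (y # xs)) = cmod (\<Sum>\<alpha>\<in>A. c \<alpha> * ((\<Prod>i<n. complex_of_real ((x#xs) ! i) ^ (\<alpha> ! i)) - (\<Prod>i<n. complex_of_real ((y#xs) ! i) ^ (\<alpha> ! i))))"
      unfolding pc[OF len(1)] pc[OF len(2)] A_def[symmetric]
      by (simp add: sum_subtractf right_diff_distrib)
    also have "\<dots> \<le> (\<Sum>\<alpha>\<in>A. cmod (c \<alpha>) * (real d * \<bar>x - y\<bar>))"
      unfolding norm_mult using h assms(2)
      by (rule_tac order_trans[OF norm_sum], intro sum_mono)
         (auto simp: norm_mult A_def intro!: mult_left_mono prod_pow_diff bx h assms(2))
    finally show "cmod (p (x # xs) - p (y # xs)) \<le> real d * M * \<bar>x - y\<bar>"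
      by (simp add: M_def sum_distrib_right sum_distrib_left mult_ac)
  qed
qed

lemma riemann_step:
  fixes f :: "real \<Rightarrow> complex"
  assumes cont: "continuous_on {0..1} f"
    and lip: "\<forall>x\<in>{0..1}. \<forall>y\<in>{0..1}. cmod (f x - f y) \<le> L * \<bar>x - y\<bar>"
    and L: "L \<ge> 0" and N: "N \<ge> 1" and k: "Suc k \<le> N"
  shows "cmod (f (real (Suc k) / real N) / of_nat N - integral {real k / real N..real (Suc k) / real N} f)
     \<le> L / real N ^ 2"
proof -
  define a where "a = real k / real N"
  define b where "b = real (Suc k) / real N"
  have ab: "b - a = 1 / real N" using N by (simp add: a_def b_def field_simps)
  have a0: "0 \<le> a" and b1: "b \<le> 1" using N k by (auto simp: a_def b_def field_simps)
  have "1 / real N \<ge> 0" by simp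
  then have aleb: "a \<le> b" using ab by linarith
  have sub: "{a..b} \<subseteq> {0..1}" using a0 b1 by auto
  have contab: "continuous_on {a..b} f" using continuous_on_subset[OF cont sub] .
  have "integral {a..b} (\<lambda>x. f b - f x) = integral {a..b} (\<lambda>x. f b) - integral {a..b} f"
    using contab by (intro integral_diff integrable_continuous_real) auto
  also have "integral {a..b} (\<lambda>x. f b) = f b / of_nat N"
    using aleb ab by (simp add: scaleR_conv_of_real field_simps)
  finally have eq: "f b / of_nat N - integral {a..b} f = integral {a..b} (\<lambda>x. f b - f x)" by simp
  have "cmod (integral {a..b} (\<lambda>x. f b - f x)) \<le> (L / real N) * (b - a)"
  proof (rule integral_bound[OF aleb])
    show "continuous_on {a..b} (\<lambda>x. f b - f x)" using contab by (intro continuous_intros) auto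
    fix t assume t: "t \<in> {a..b}"
    have tin: "t \<in> {0..1}" "b \<in> {0..1}" using sub t aleb by auto
    have "cmod (f b - f t) \<le> L * \<bar>b - t\<bar>" using lip tin by blast
    also have "\<dots> \<le> L * (1 / real N)" using t ab L by (intro mult_left_mono) auto
    finally show "cmod (f b - f t) \<le> L / real N" by simp
  qed
  then show ?thesis using eq ab by (simp add: a_def b_def power2_eq_square)
qed

lemma riemann:
  fixes f :: "real \<Rightarrow> complex"
  assumes cont: "continuous_on {0..1} f"
    and lip: "\<forall>x\<in>{0..1}. \<forall>y\<in>{0..1}. cmod (f x - f y) \<le> L * \<bar>x - y\<bar>"
    and L: "L \<ge> 0" and N: "N \<ge> 1" and jk: "j \<le> k" and kN: "k \<le> N"
  shows "cmod ((\<Sum>i\<in>{j<..k}. f (real i / real N)) / of_nat N - integral {real j / real N..real k / real N} f)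
     \<le> real (k - j) * L / real N ^ 2"
  using jk kN
proof (induction k rule: dec_induct)
  case base
  then show ?case by simp
next
  case (step m)
  have kN: "m \<le> N" using step by simp
  note IH = step.IH[OF kN]
  have sub: "{real j / real N..real (Suc m) / real N} \<subseteq> {0..1}" using N step.prems
    by (auto simp: field_simps)
  have int: "f integrable_on {real j / real N..real (Suc m) / real N}"
    by (intro integrable_continuous_real continuous_on_subset[OF cont sub])
  have comb: "integral {real j / real N..real m / real N} f + integral {real m / real N..real (Suc m) / real N} f
      = integral {real j / real N..real (Suc m) / real N} f"
    using N step.hyps by (intro Henstock_Kurzweil_Integration.integral_combine int) (auto simp: divide_right_mono)
  have ins: "{j<..Suc m} = insert (Suc m) {j<..m}" using step.hyps by auto
  have "(\<Sum>i\<in>{j<..Suc m}. f (real i / real N)) / of_nat N - integral {real j / real N..real (Suc m) / real N} f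
     = ((\<Sum>i\<in>{j<..m}. f (real i / real N)) / of_nat N - integral {real j / real N..real m / real N} f)
       + (f (real (Suc m) / real N) / of_nat N - integral {real m / real N..real (Suc m) / real N} f)"
    unfolding ins comb[symmetric] by (simp add: add_divide_distrib del: of_nat_Suc)
  also have "cmod \<dots> \<le> real (m - j) * L / real N ^ 2 + L / real N ^ 2"
    by (rule order_trans[OF norm_triangle_ineq add_mono[OF IH riemann_step[OF cont lip L N step.prems]]])
  also have "\<dots> = real (Suc m - j) * L / real N ^ 2"
    using step.hyps by (simp add: Suc_diff_le of_nat_diff add_divide_distrib[symmetric] algebra_simps)
  finally show ?case .
qed

lemma lbint_eq:
  fixes G f :: "real \<Rightarrow> complex"
  assumes ab: "a \<le> b" and cont: "continuous_on {a..b} f" and eq: "\<And>x. a < x \<Longrightarrow> x < b \<Longrightarrow> G x = f x"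
  shows "(LBINT x:{a..b}. G x) = integral {a..b} f"
proof -
  define H where "H x = (if x = a then G a else if x = b then G b else indicator {a..b} x *\<^sub>R f x)" for x
  have pw: "indicator {a..b} x *\<^sub>R G x = H x" for x
    using ab eq by (auto simp: H_def indicator_def)
  have mf: "(\<lambda>x. indicator {a..b} x *\<^sub>R f x) \<in> borel_measurable lborel"
    using borel_measurable_continuous_on_indicator[OF _ cont] by simp
  have mH: "H \<in> borel_measurable lborel"
    unfolding H_def by (intro measurable_If mf) auto
  have "(LBINT x:{a..b}. G x) = integral\<^sup>L lborel H"
    unfolding set_lebesgue_integral_def pw by simp
  also have "\<dots> = integral\<^sup>L lborel (\<lambda>x. indicator {a..b} x *\<^sub>R f x)"
  proof (intro integral_cong_AE mH mf)
    show "AE x in lborel. H x = indicator {a..b} x *\<^sub>R f x"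
      using AE_lborel_singleton[of a] AE_lborel_singleton[of b]
      by eventually_elim (auto simp: H_def)
  qed
  also have "\<dots> = (LBINT x:{a..b}. f x)" unfolding set_lebesgue_integral_def by simp
  also have "\<dots> = integral {a..b} f"
    by (intro set_borel_integral_eq_integral(2)) (simp add: set_integrable_def borel_integrable_compact cont)
  finally show ?thesis .
qed

lemma lip_cont:
  fixes f :: "real \<Rightarrow> complex"
  assumes "\<forall>x\<in>{0..1}. \<forall>y\<in>{0..1}. cmod (f x - f y) \<le> L * \<bar>x - y\<bar>" "L \<ge> 0"
  shows "continuous_on {0..1} f"
proof (rule lipschitz_on_continuous_on)
  show "L-lipschitz_on {0..1} f"
    using assms by (intro lipschitz_onI) (auto simp: dist_norm)
qed

lemma riemann':
  fixes f :: "real \<Rightarrow> complex"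
  assumes lip: "\<forall>x\<in>{0..1}. \<forall>y\<in>{0..1}. cmod (f x - f y) \<le> L * \<bar>x - y\<bar>"
    and L: "L \<ge> 0" and N: "N \<ge> 1" and jk: "j \<le> k" and kN: "k \<le> N"
  shows "cmod ((\<Sum>i\<in>{j<..k}. f (real i / real N)) / of_nat N - integral {real j / real N..real k / real N} f)
     \<le> L / real N"
proof -
  have "real (k - j) * L / real N ^ 2 \<le> real N * L / real N ^ 2"
    using kN L by (intro divide_right_mono mult_right_mono) auto
  also have "\<dots> = L / real N" using N by (simp add: power2_eq_square)
  finally show ?thesis using riemann[OF lip_cont[OF lip L] lip L N jk kN] by linarith
qed

lemma validI_cons_iff:
  assumes "validI (w0 # wt)"
  shows "validI (i # w0 # wt) \<longleftrightarrow> 1 \<le> i \<and> (w0 < i \<or> (i < w0 \<and> vshape 1 (w0 # wt)))"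
proof
  assume h: "validI (i # w0 # wt)"
  then obtain m where "vshape m (i # w0 # wt)" by (auto simp: validI_def)
  from vshape_cons_inv[OF this] h show "1 \<le> i \<and> (w0 < i \<or> (i < w0 \<and> vshape 1 (w0 # wt)))"
    by (auto simp: validI_def)
next
  assume h: "1 \<le> i \<and> (w0 < i \<or> (i < w0 \<and> vshape 1 (w0 # wt)))"
  obtain m where m: "vshape m (w0 # wt)" using assms by (auto simp: validI_def)
  show "validI (i # w0 # wt)"
    using h assms vshape_cons_gt[OF m, of i] vshape_cons_lt[of w0 wt i] by (auto simp: validI_def)
qed

lemma per_ws:
  fixes g :: "real list \<Rightarrow> complex" and P :: "nat \<Rightarrow> real list \<Rightarrow> complex"
  assumes Pg: "\<forall>m\<in>{1..n}. \<forall>zs. length zs = n \<and> vshape m zs \<and> (\<forall>z\<in>set zs. 0 \<le> z \<and> z \<le> 1) \<longrightarrow> g zs = P m zs"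
    and Pb: "\<forall>m\<in>{1..n}. \<forall>x y xs. length xs = n - 1 \<and> (\<forall>z\<in>set xs. 0 \<le> z \<and> z \<le> 1) \<and> 0 \<le> x \<and> x \<le> 1 \<and> 0 \<le> y \<and> y \<le> 1
        \<longrightarrow> cmod (P m (x # xs)) \<le> M \<and> cmod (P m (x # xs) - P m (y # xs)) \<le> L * \<bar>x - y\<bar>"
    and L: "L \<ge> 0" and M: "M \<ge> 0" and n: "n \<ge> 1" and N: "N \<ge> 1"
    and ws: "length ws = n - 1" "validI ws" "\<forall>i\<in>set ws. i \<le> N"
  shows "cmod ((\<Sum>i=1..N. if validI (i # ws) then g (map (\<lambda>i. real i / real N) (i # ws)) else 0) / of_nat N
          - a_adj_cont g (map (\<lambda>i. real i / real N) ws)) \<le> (2 * L + M) / real N"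
proof -
  define xs where "xs = map (\<lambda>i. real i / real N) ws"
  define F where "F m x = P m (x # xs)" for m x
  have xs01: "\<forall>z\<in>set xs. 0 \<le> z \<and> z \<le> 1" using ws(3) N by (auto simp: xs_def)
  have lenxs: "length xs = n - 1" using ws by (simp add: xs_def)
  have Flip: "\<forall>x\<in>{0..1}. \<forall>y\<in>{0..1}. cmod (F m x - F m y) \<le> L * \<bar>x - y\<bar>" if "m \<in> {1..n}" for m
    using Pb that xs01 lenxs by (auto simp: F_def)
  have Fbd: "cmod (F m x) \<le> M" if "m \<in> {1..n}" "x \<in> {0..1}" for m x
    using Pb that xs01 lenxs by (auto simp: F_def)
  have Fcont: "continuous_on {0..1} (F m)" if "m \<in> {1..n}" for m
    using lip_cont[OF Flip[OF that] L] .
  have mono: "\<And>x y::nat. real x / real N < real y / real N \<longleftrightarrow> x < y" using N by (simp add: divide_less_cancel)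
  have gF: "g (x # xs) = F m x" if "m \<in> {1..n}" "vshape m (x # xs)" "0 \<le> x" "x \<le> 1" for m x
    using Pg that xs01 lenxs n by (auto simp: F_def)
  have Nne: "real N \<noteq> 0" using N by simp
  show ?thesis
  proof (cases ws)
    case Nil
    then have n1: "n = 1" using ws n by simp
    have xsn: "xs = []" using Nil by (simp add: xs_def)
    have sumeq: "(\<Sum>i=1..N. if validI (i # ws) then g (map (\<lambda>i. real i / real N) (i # ws)) else 0)
        = (\<Sum>i\<in>{0<..N}. F 1 (real i / real N))"
    proof (rule sum.cong)
      show "{1..N} = {0<..N}" by auto
      fix i assume i: "i \<in> {0<..N}"
      have v: "validI [i]" using i vshape_single[of i] by (auto simp: validI_def)
      have "g [real i / real N] = F 1 (real i / real N)"
        using gF[of 1 "real i / real N"] n1 xsn i vshape_single[of "real i / real N"] by auto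
      then show "(if validI (i # ws) then g (map (\<lambda>i. real i / real N) (i # ws)) else 0) = F 1 (real i / real N)"
        using v Nil by simp
    qed
    have inteq: "a_adj_cont g xs = integral {real 0 / real N..real N / real N} (F 1)"
    proof -
      have "(LBINT x:{0..1}. g [x]) = integral {0..1} (F 1)"
      proof (rule lbint_eq)
        show "continuous_on {0..1} (F 1)" using Fcont n1 by auto
        fix x :: real assume "0 < x" "x < 1"
        then show "g [x] = F 1 x" using gF[of 1 x] n1 xsn vshape_single[of x] by auto
      qed simp
      then show ?thesis using Nne xsn by simp
    qed
    show ?thesis
      using riemann'[OF Flip L N, of 1 0 N] n1 L M N unfolding sumeq xs_def[symmetric] inteq
      by (auto intro: order_trans simp: divide_right_mono)
  next
    case (Cons w0 wt)
    have w0: "1 \<le> w0" "w0 \<le> N" using ws Cons by (auto simp: validI_def)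
    obtain m0 where m0: "vshape m0 ws" using ws(2) Cons by (auto simp: validI_def)
    have m0n: "1 \<le> m0" "m0 \<le> n - 1" using m0 ws(1) by (auto simp: vshape_def)
    have Sm: "Suc m0 \<in> {1..n}" and one: "1 \<in> {1..n}" using m0n n by auto
    define inc where "inc = vshape 1 ws"
    define x1 where "x1 = real w0 / real N"
    define xt where "xt = map (\<lambda>i. real i / real N) wt"
    have xsC: "xs = x1 # xt" by (simp add: xs_def Cons x1_def xt_def)
    have m0x: "vshape m0 (x1 # xt)" using m0 mono unfolding xsC[symmetric] xs_def by (subst vshape_map) auto
    have incx: "vshape 1 (x1 # xt) \<longleftrightarrow> inc" using mono unfolding xsC[symmetric] xs_def inc_def by (subst vshape_map) auto
    have x101: "0 \<le> x1" "x1 \<le> 1" using w0 N by (auto simp: x1_def)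
    have i01: "0 \<le> real i / real N" "real i / real N \<le> 1" if "i \<le> N" for i
      using that N by auto
    define A where "A i = (if w0 < i then F (Suc m0) (real i / real N) else 0)" for i
    define B where "B i = (if inc \<and> i < w0 then F 1 (real i / real N) else 0)" for i
    have hAB: "(if validI (i # ws) then g (map (\<lambda>i. real i / real N) (i # ws)) else 0) = A i + B i"
      if i: "i \<in> {1..N}" for i
    proof -
      have mp: "map (\<lambda>i. real i / real N) (i # ws) = (real i / real N) # x1 # xt" using xsC xs_def by simp
      have vi: "validI (i # ws) \<longleftrightarrow> (w0 < i \<or> (i < w0 \<and> inc))"
        using validI_cons_iff[of w0 wt i] ws(2) i unfolding Cons inc_def by auto
      consider "w0 < i" | "i < w0" "inc" | "\<not> (w0 < i \<or> (i < w0 \<and> inc))" by blast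
      then show ?thesis
      proof cases
        case 1
        have "real w0 / real N < real i / real N" using mono 1 by blast
        then have "vshape (Suc m0) ((real i / real N) # x1 # xt)" using vshape_cons_gt[OF m0x] x1_def by blast
        then have "g ((real i / real N) # xs) = F (Suc m0) (real i / real N)"
          using gF[OF Sm] i01 i xsC by auto
        then show ?thesis using 1 vi mp xsC by (simp add: A_def B_def)
      next
        case 2
        have "real i / real N < real w0 / real N" using mono 2 by blast
        then have "vshape 1 ((real i / real N) # x1 # xt)" using vshape_cons_lt 2 incx x1_def by blast
        then have "g ((real i / real N) # xs) = F 1 (real i / real N)"
          using gF[OF one] i01 i xsC by auto
        then show ?thesis using 2 vi mp xsC by (simp add: A_def B_def)
      next
        case 3
        then show ?thesis using vi by (auto simp: A_def B_def)
      qed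
    qed
    have SA: "(\<Sum>i=1..N. A i) = (\<Sum>i\<in>{w0<..N}. F (Suc m0) (real i / real N))"
    proof -
      have "(\<Sum>i=1..N. A i) = (\<Sum>i\<in>{i\<in>{1..N}. w0 < i}. F (Suc m0) (real i / real N))"
        unfolding A_def by (rule sum.inter_filter[symmetric]) simp
      also have "{i\<in>{1..N}. w0 < i} = {w0<..N}" using w0 by auto
      finally show ?thesis .
    qed
    have SB: "(\<Sum>i=1..N. B i) = (if inc then (\<Sum>i\<in>{0<..w0}. F 1 (real i / real N)) - F 1 x1 else 0)"
    proof -
      have h1: "(\<Sum>i=1..N. B i) = (if inc then (\<Sum>i\<in>{i\<in>{1..N}. i < w0}. F 1 (real i / real N)) else 0)"
      proof (cases inc)
        case True
        then show ?thesis unfolding B_def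
          using sum.inter_filter[of "{1..N}" "\<lambda>i. F 1 (real i / real N)" "\<lambda>i. i < w0"] by simp
      qed (simp add: B_def)
      have "{0<..w0} = insert w0 {i\<in>{1..N}. i < w0}" using w0 by auto
      then have "(\<Sum>i\<in>{0<..w0}. F 1 (real i / real N)) = F 1 x1 + (\<Sum>i\<in>{i\<in>{1..N}. i < w0}. F 1 (real i / real N))"
        by (simp add: x1_def)
      then show ?thesis using h1 by simp
    qed
    have IA: "(LBINT x:{x1..1}. g (x # x1 # xt)) = integral {real w0 / real N..real N / real N} (F (Suc m0))"
    proof -
      have "(LBINT x:{x1..1}. g (x # x1 # xt)) = integral {x1..1} (F (Suc m0))"
      proof (rule lbint_eq)
        show "x1 \<le> 1" by (rule x101)
        show "continuous_on {x1..1} (F (Suc m0))" using x101 by (intro continuous_on_subset[OF Fcont[OF Sm]]) auto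
        fix x assume x: "x1 < x" "x < 1"
        then have "vshape (Suc m0) (x # x1 # xt)" using vshape_cons_gt[OF m0x] by blast
        then show "g (x # x1 # xt) = F (Suc m0) x" using gF[OF Sm, of x] x x101 xsC by auto
      qed
      then show ?thesis using Nne by (simp add: x1_def)
    qed
    have IB: "inc \<Longrightarrow> (LBINT x:{0..x1}. g (x # x1 # xt)) = integral {real 0 / real N..real w0 / real N} (F 1)"
    proof -
      assume inc
      have "(LBINT x:{0..x1}. g (x # x1 # xt)) = integral {0..x1} (F 1)"
      proof (rule lbint_eq)
        show "0 \<le> x1" by (rule x101)
        show "continuous_on {0..x1} (F 1)" using x101 by (intro continuous_on_subset[OF Fcont[OF one]]) auto
        fix x assume x: "0 < x" "x < x1"
        then have "vshape 1 (x # x1 # xt)" using vshape_cons_lt \<open>inc\<close> incx by blast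
        then show "g (x # x1 # xt) = F 1 x" using gF[OF one, of x] x x101 xsC by auto
      qed
      then show ?thesis by (simp add: x1_def)
    qed
    have adj: "a_adj_cont g xs = (if inc then integral {real 0 / real N..real w0 / real N} (F 1) else 0)
        + integral {real w0 / real N..real N / real N} (F (Suc m0))"
      unfolding xsC a_adj_cont.simps IA using IB incx by simp
    have sumS: "(\<Sum>i=1..N. if validI (i # ws) then g (map (\<lambda>i. real i / real N) (i # ws)) else 0)
       = (\<Sum>i\<in>{w0<..N}. F (Suc m0) (real i / real N)) + (if inc then (\<Sum>i\<in>{0<..w0}. F 1 (real i / real N)) - F 1 x1 else 0)"
    proof -
      have "(\<Sum>i=1..N. if validI (i # ws) then g (map (\<lambda>i. real i / real N) (i # ws)) else 0) = (\<Sum>i=1..N. A i + B i)"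
        using hAB by (intro sum.cong) auto
      then show ?thesis by (simp only: sum.distrib SA SB)
    qed
    define EA where "EA = (\<Sum>i\<in>{w0<..N}. F (Suc m0) (real i / real N)) / of_nat N - integral {real w0 / real N..real N / real N} (F (Suc m0))"
    define EB where "EB = (\<Sum>i\<in>{0<..w0}. F 1 (real i / real N)) / of_nat N - integral {real 0 / real N..real w0 / real N} (F 1)"
    have EAb: "cmod EA \<le> L / real N" unfolding EA_def using riemann'[OF Flip[OF Sm] L N, of w0 N] w0 by simp
    have EBb: "cmod EB \<le> L / real N" unfolding EB_def using riemann'[OF Flip[OF one] L N, of 0 w0] w0 by simp
    have Fx1: "cmod (F 1 x1 / of_nat N) \<le> M / real N"
      using Fbd[OF one, of x1] x101 by (simp add: norm_divide divide_right_mono)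
    have eq: "(\<Sum>i=1..N. if validI (i # ws) then g (map (\<lambda>i. real i / real N) (i # ws)) else 0) / of_nat N
          - a_adj_cont g (map (\<lambda>i. real i / real N) ws) = EA + (if inc then EB - F 1 x1 / of_nat N else 0)"
      unfolding sumS xs_def[symmetric] adj EA_def EB_def by (cases inc) (simp_all add: diff_divide_distrib add_divide_distrib)
    have "cmod (EA + (if inc then EB - F 1 x1 / of_nat N else 0)) \<le> L / real N + (L / real N + M / real N)"
    proof -
      have "cmod (if inc then EB - F 1 x1 / of_nat N else 0) \<le> L / real N + M / real N"
        using EBb Fx1 L M by (auto intro: order_trans[OF norm_triangle_ineq4])
      then show ?thesis using EAb by (intro order_trans[OF norm_triangle_ineq]) simp
    qed
    also have "\<dots> = (2 * L + M) / real N" by (simp add: add_divide_distrib)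
    finally show ?thesis unfolding eq .
  qed
qed

lemma powr_lem2:
  assumes "N \<ge> 1" "n \<ge> 1"
  shows "1 / sqrt (real N) * real N powr (- real n / 2) = real N powr (- real (n - 1) / 2) / real N"
proof -
  have a: "1 / sqrt (real N) * real N powr (- real (n - 1) / 2) = real N powr (- real n / 2)"
    using assms by (simp add: powr_half_sqrt[symmetric] powr_minus_divide[symmetric] powr_add[symmetric] of_nat_diff field_simps)
  have "1 / sqrt (real N) * real N powr (- real n / 2) = (1 / sqrt (real N))^2 * real N powr (- real (n - 1) / 2)"
    unfolding a[symmetric] by (simp add: power2_eq_square)
  also have "(1 / sqrt (real N))^2 = 1 / real N" by (simp add: power_divide)
  finally show ?thesis by simp
qed

lemma D_zero:
  assumes "\<not> (set w \<subseteq> {1..N} \<and> length w = n - 1)" "n \<ge> 1"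
  shows "aN_adj N (vN N n g) w - vN N (n - 1) (a_adj_cont g) w = 0"
proof -
  have "vN N (n - 1) (a_adj_cont g) w = 0" using assms by (auto simp: vN_def validI_def)
  moreover have "aN_adj N (vN N n g) w = 0"
    unfolding aN_adj_def
  proof (intro mult_eq_0_iff[THEN iffD2] disjI2 sum.neutral ballI)
    fix i
    show "(if validI w \<and> validI (i # w) then vN N n g (i # w) else 0) = 0"
    proof (cases "validI w \<and> validI (i # w) \<and> length (i # w) = n \<and> (\<forall>j\<in>set (i # w). j \<le> N)")
      case True
      then have "set w \<subseteq> {1..N} \<and> length w = n - 1" by (auto simp: validI_def)
      then show ?thesis using assms(1) by blast
    next
      case False
      then show ?thesis by (auto simp: vN_def)
    qed
  qed
  ultimately show ?thesis by simp
qed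

lemma D_formula:
  assumes N: "N \<ge> 1" and n: "n \<ge> 1" and w: "length w = n - 1" "validI w" "\<forall>i\<in>set w. i \<le> N"
  shows "aN_adj N (vN N n g) w - vN N (n - 1) (a_adj_cont g) w =
     complex_of_real (real N powr (- real (n - 1) / 2)) *
     ((\<Sum>i=1..N. if validI (i # w) then g (map (\<lambda>i. real i / real N) (i # w)) else 0) / of_nat N
          - a_adj_cont g (map (\<lambda>i. real i / real N) w))"
proof -
  have s: "(\<Sum>i=1..N. if validI w \<and> validI (i # w) then vN N n g (i # w) else 0)
     = complex_of_real (real N powr (- real n / 2)) * (\<Sum>i=1..N. if validI (i # w) then g (map (\<lambda>i. real i / real N) (i # w)) else 0)"
    unfolding sum_distrib_left using w n by (intro sum.cong) (auto simp: vN_def)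
  have "aN_adj N (vN N n g) w = complex_of_real (1 / sqrt (real N) * real N powr (- real n / 2)) *
      (\<Sum>i=1..N. if validI (i # w) then g (map (\<lambda>i. real i / real N) (i # w)) else 0)"
    unfolding aN_adj_def s by simp
  also have "\<dots> = complex_of_real (real N powr (- real (n - 1) / 2)) *
      ((\<Sum>i=1..N. if validI (i # w) then g (map (\<lambda>i. real i / real N) (i # w)) else 0) / of_nat N)"
    unfolding powr_lem2[OF N n] by simp
  finally show ?thesis using w by (simp add: vN_def right_diff_distrib)
qed

theorem mainTheorem16:
  fixes n :: nat and g :: "real list \<Rightarrow> complex"
  assumes "n \<ge> 1" and "g \<in> Dn n"
  shows "(\<forall>N\<ge>1. aN N (vN N n g) = vN N (n + 1) (a_cont g)) \<and>
    (\<exists>C>0. \<forall>N\<ge>1. dv_norm (\<lambda>w. aN_adj N (vN N n g) w - vN N (n - 1) (a_adj_cont g) w)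
                      \<le> C / real N)"
proof (intro conjI allI impI)
  fix N :: nat assume "N \<ge> 1"
  then show "aN N (vN N n g) = vN N (n + 1) (a_cont g)" using part1 assms(1) by blast
next
  have n: "n \<ge> 1" by (rule assms(1))
  have "\<forall>m\<in>{1..n}. \<exists>p. poly_fun n p \<and>
        (\<forall>xs. length xs = n \<and> vshape m xs \<and> (\<forall>x\<in>set xs. 0 \<le> x \<and> x \<le> 1) \<longrightarrow> g xs = p xs)"
    using assms(2) unfolding Dn_def by blast
  then obtain P where P: "\<forall>m\<in>{1..n}. poly_fun n (P m) \<and>
        (\<forall>xs. length xs = n \<and> vshape m xs \<and> (\<forall>x\<in>set xs. 0 \<le> x \<and> x \<le> 1) \<longrightarrow> g xs = P m xs)"
    by metis
  have "\<forall>m\<in>{1..n}. \<exists>LM. fst LM \<ge> 0 \<and> snd LM \<ge> 0 \<and> (\<forall>x y xs. length xs = n - 1 \<and> (\<forall>z\<in>set xs. 0 \<le> z \<and> z \<le> 1)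
     \<and> 0 \<le> x \<and> x \<le> 1 \<and> 0 \<le> y \<and> y \<le> 1 \<longrightarrow>
       cmod (P m (x # xs)) \<le> snd LM \<and> cmod (P m (x # xs) - P m (y # xs)) \<le> fst LM * \<bar>x - y\<bar>)"
  proof
    fix m assume "m \<in> {1..n}"
    then obtain L M where "L \<ge> 0 \<and> M \<ge> 0 \<and> (\<forall>x y xs. length xs = n - 1 \<and> (\<forall>z\<in>set xs. 0 \<le> z \<and> z \<le> 1)
     \<and> 0 \<le> x \<and> x \<le> 1 \<and> 0 \<le> y \<and> y \<le> 1 \<longrightarrow>
       cmod (P m (x # xs)) \<le> M \<and> cmod (P m (x # xs) - P m (y # xs)) \<le> L * \<bar>x - y\<bar>)"
      using poly_fun_lip[of n "P m"] P n by blast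
    then show "\<exists>LM. fst LM \<ge> 0 \<and> snd LM \<ge> 0 \<and> (\<forall>x y xs. length xs = n - 1 \<and> (\<forall>z\<in>set xs. 0 \<le> z \<and> z \<le> 1)
     \<and> 0 \<le> x \<and> x \<le> 1 \<and> 0 \<le> y \<and> y \<le> 1 \<longrightarrow>
       cmod (P m (x # xs)) \<le> snd LM \<and> cmod (P m (x # xs) - P m (y # xs)) \<le> fst LM * \<bar>x - y\<bar>)"
      by (intro exI[of _ "(L, M)"]) (simp only: fst_conv snd_conv, blast)
  qed
  then obtain LM where LM: "\<forall>m\<in>{1..n}. fst (LM m) \<ge> 0 \<and> snd (LM m) \<ge> 0 \<and> (\<forall>x y xs. length xs = n - 1 \<and> (\<forall>z\<in>set xs. 0 \<le> z \<and> z \<le> 1)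
     \<and> 0 \<le> x \<and> x \<le> 1 \<and> 0 \<le> y \<and> y \<le> 1 \<longrightarrow>
       cmod (P m (x # xs)) \<le> snd (LM m) \<and> cmod (P m (x # xs) - P m (y # xs)) \<le> fst (LM m) * \<bar>x - y\<bar>)"
    by metis
  define L where "L = (\<Sum>m\<in>{1..n}. fst (LM m))"
  define M where "M = (\<Sum>m\<in>{1..n}. snd (LM m))"
  have L0: "L \<ge> 0" and M0: "M \<ge> 0" using LM unfolding L_def M_def by (auto intro: sum_nonneg)
  have Lm: "fst (LM m) \<le> L" and Mm: "snd (LM m) \<le> M" if "m \<in> {1..n}" for m
    unfolding L_def M_def using LM that by (auto intro!: member_le_sum)
  have Pg: "\<forall>m\<in>{1..n}. \<forall>zs. length zs = n \<and> vshape m zs \<and> (\<forall>z\<in>set zs. 0 \<le> z \<and> z \<le> 1) \<longrightarrow> g zs = P m zs"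
    using P by blast
  have Pb: "\<forall>m\<in>{1..n}. \<forall>x y xs. length xs = n - 1 \<and> (\<forall>z\<in>set xs. 0 \<le> z \<and> z \<le> 1) \<and> 0 \<le> x \<and> x \<le> 1 \<and> 0 \<le> y \<and> y \<le> 1
        \<longrightarrow> cmod (P m (x # xs)) \<le> M \<and> cmod (P m (x # xs) - P m (y # xs)) \<le> L * \<bar>x - y\<bar>"
  proof (intro ballI allI impI conjI)
    fix m and x y :: real and xs :: "real list" assume m: "m \<in> {1..n}" and h: "length xs = n - 1 \<and> (\<forall>z\<in>set xs. 0 \<le> z \<and> z \<le> 1) \<and> 0 \<le> x \<and> x \<le> 1 \<and> 0 \<le> y \<and> (y::real) \<le> 1"
    have b: "cmod (P m (x # xs)) \<le> snd (LM m)" "cmod (P m (x # xs) - P m (y # xs)) \<le> fst (LM m) * \<bar>x - y\<bar>"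
      using LM m h by blast+
    show "cmod (P m (x # xs)) \<le> M" using b(1) Mm[OF m] by linarith
    have "fst (LM m) * \<bar>x - y\<bar> \<le> L * \<bar>x - y\<bar>" using Lm[OF m] by (intro mult_right_mono) auto
    then show "cmod (P m (x # xs) - P m (y # xs)) \<le> L * \<bar>x - y\<bar>" using b(2) by linarith
  qed
  define K where "K = 2 * L + M"
  have K0: "K \<ge> 0" using L0 M0 by (simp add: K_def)
  show "\<exists>C>0. \<forall>N\<ge>1. dv_norm (\<lambda>w. aN_adj N (vN N n g) w - vN N (n - 1) (a_adj_cont g) w) \<le> C / real N"
  proof (intro exI[of _ "K + 1"] conjI allI impI)
    show "K + 1 > 0" using K0 by simp
    fix N :: nat assume N: "N \<ge> 1"
    define D where "D w = aN_adj N (vN N n g) w - vN N (n - 1) (a_adj_cont g) w" for w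
    define S where "S = {w. set w \<subseteq> {1..N} \<and> length w = n - 1}"
    define c where "c = real N powr (- real (n - 1) / 2)"
    have c0: "c \<ge> 0" by (simp add: c_def)
    have finS: "finite S" unfolding S_def by (rule finite_lists_length_eq) simp
    have cardS: "card S = N ^ (n - 1)" unfolding S_def by (simp add: card_lists_length_eq)
    have Dz: "D w = 0" if "w \<notin> S" for w using D_zero[of w N n g] that n by (simp add: D_def S_def)
    have Db: "cmod (D w) \<le> c * K / real N" if "w \<in> S" for w
    proof (cases "validI w")
      case True
      have w: "length w = n - 1" "\<forall>i\<in>set w. i \<le> N" using that by (auto simp: S_def)
      have "cmod (D w) = c * cmod ((\<Sum>i=1..N. if validI (i # w) then g (map (\<lambda>i. real i / real N) (i # w)) else 0) / of_nat N
          - a_adj_cont g (map (\<lambda>i. real i / real N) w))"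
        unfolding D_def D_formula[OF N n w(1) True w(2)] c_def norm_mult by simp
      also have "\<dots> \<le> c * (K / real N)"
        using per_ws[OF Pg Pb L0 M0 n N w(1) True w(2)] c0 unfolding K_def by (intro mult_left_mono) auto
      finally show ?thesis by simp
    next
      case False
      then have "D w = 0" by (simp add: D_def aN_adj_def vN_def)
      then show ?thesis using c0 K0 by simp
    qed
    have "infsum (\<lambda>w. (cmod (D w))\<^sup>2) UNIV = (\<Sum>w\<in>S. (cmod (D w))\<^sup>2)"
      using Dz finS by (subst infsum_cong_neutral[where T = S]) auto
    also have "\<dots> \<le> (\<Sum>w\<in>S. (c * K / real N)\<^sup>2)"
      using Db by (intro sum_mono power_mono) auto
    also have "\<dots> = real N ^ (n - 1) * c\<^sup>2 * K\<^sup>2 / real N ^ 2"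
      using cardS by (simp add: power_mult_distrib power_divide)
    also have "real N ^ (n - 1) * c\<^sup>2 = 1"
    proof -
      have "c\<^sup>2 = real N powr (- real (n - 1))"
        unfolding c_def by (simp add: power2_eq_square powr_add[symmetric])
      then show ?thesis using N by (simp add: powr_realpow[symmetric] powr_add[symmetric])
    qed
    finally have inf: "infsum (\<lambda>w. (cmod (D w))\<^sup>2) UNIV \<le> (K / real N)\<^sup>2" by (simp add: power_divide)
    have "dv_norm D \<le> sqrt ((K / real N)\<^sup>2)" unfolding dv_norm_def using inf by (rule real_sqrt_le_mono)
    also have "\<dots> = K / real N" using K0 by simp
    also have "\<dots> \<le> (K + 1) / real N" using N by (simp add: divide_right_mono)
    finally show "dv_norm (\<lambda>w. aN_adj N (vN N n g) w - vN N (n - 1) (a_adj_cont g) w) \<le> (K + 1) / real N"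
      unfolding D_def by simp
  qed
qed

end
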